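(* $E^{ce}_{\mathrm{perm}}$ and $E^{ce}_{\mathrm{set}}$ are computably bireducible: $E^{ce}_{\mathrm{perm}}\leq_cE^{ce}_{\mathrm{set}}$ and $E^{ce}_{\mathrm{set}}\leq_cE^{ce}_{\mathrm{perm}}$.
   Context: $W_e$ is the $e$-th c.e. set; $A^{[n]}=\{x:\langle x,n\rangle\in A\}$ is the $n$-th column of $A\subseteq\omega$ under the standard pairing function. $i\,E^{ce}_{\mathrm{perm}}\,j\iff$ there is a permutation $p$ of $\omega$ with $W_i^{[n]}=W_j^{[p(n)]}$ for all $n$. $i\,E^{ce}_{\mathrm{set}}\,j\iff\{W_i^{[n]}:n\in\omega\}=\{W_j^{[n]}:n\in\omega\}$. For equivalence relations $E,F$ on $\omega$, $E\leq_cF$ means there is a total computable $g$ with $x\,E\,y\iff g(x)\,F\,g(y)$ for all $x,y$. *)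

theory Defs
  imports Main "HOL-Library.Nat_Bijection"
begin

datatype recf =
    Zero
  | Succ
  | Proj nat
  | Comp recf "recf list"
  | Prim recf recf
  | Mu recf

inductive eval :: "recf \<Rightarrow> nat list \<Rightarrow> nat \<Rightarrow> bool" where
  eval_Zero: "eval Zero xs 0"
| eval_Succ: "eval Succ (x # xs) (Suc x)"
| eval_Proj: "i < length xs \<Longrightarrow> eval (Proj i) xs (xs ! i)"
| eval_Comp: "list_all2 (\<lambda>g y. eval g xs y) gs ys \<Longrightarrow> eval f ys z \<Longrightarrow> eval (Comp f gs) xs z"
| eval_Prim0: "eval f xs y \<Longrightarrow> eval (Prim f g) (0 # xs) y"
| eval_PrimS: "eval (Prim f g) (n # xs) y \<Longrightarrow> eval g (n # y # xs) z
      \<Longrightarrow> eval (Prim f g) (Suc n # xs) z"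
| eval_Mu: "eval f (n # xs) 0 \<Longrightarrow> (\<forall>m<n. \<exists>k. eval f (m # xs) (Suc k))
      \<Longrightarrow> eval (Mu f) xs n"

fun encode :: "recf \<Rightarrow> nat" where
  "encode Zero = prod_encode (0, 0)"
| "encode Succ = prod_encode (1, 0)"
| "encode (Proj i) = prod_encode (2, i)"
| "encode (Comp f gs) = prod_encode (3, prod_encode (encode f, list_encode (map encode gs)))"
| "encode (Prim f g) = prod_encode (4, prod_encode (encode f, encode g))"
| "encode (Mu f) = prod_encode (5, encode f)"

text \<open>The e-th c.e. set: the domain of the e-th unary partial recursive function
  (empty if e codes no function).\<close>
definition W :: "nat \<Rightarrow> nat set" where
  "W e = {x. \<exists>f y. encode f = e \<and> eval f [x] y}"

definition computable :: "(nat \<Rightarrow> nat) \<Rightarrow> bool" where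
  "computable g \<longleftrightarrow> (\<exists>f. \<forall>x. eval f [x] (g x))"

definition column :: "nat set \<Rightarrow> nat \<Rightarrow> nat set" where
  "column A n = {x. prod_encode (x, n) \<in> A}"

definition E_perm :: "nat \<Rightarrow> nat \<Rightarrow> bool" where
  "E_perm i j \<longleftrightarrow> (\<exists>p. bij p \<and> (\<forall>n. column (W i) n = column (W j) (p n)))"

definition E_set :: "nat \<Rightarrow> nat \<Rightarrow> bool" where
  "E_set i j \<longleftrightarrow> range (column (W i)) = range (column (W j))"

definition creducible :: "(nat \<Rightarrow> nat \<Rightarrow> bool) \<Rightarrow> (nat \<Rightarrow> nat \<Rightarrow> bool) \<Rightarrow> bool" where
  "creducible E F \<longleftrightarrow> (\<exists>g. computable g \<and> (\<forall>x y. E x y \<longleftrightarrow> F (g x) (g y)))"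

end

theory Submission
  imports Defs "HOL-Library.Infinite_Set"
begin



lemma eval_det: "eval f xs y \<Longrightarrow> eval f xs y' \<Longrightarrow> y = y'"
proof (induction arbitrary: y' rule: eval.induct)
  case (eval_Zero xs) from eval_Zero.prems show ?case by (cases rule: eval.cases) (use eval_Zero in auto)
next
  case (eval_Succ x xs) from eval_Succ.prems show ?case by (cases rule: eval.cases) (use eval_Succ in auto)
next
  case (eval_Proj i xs) from eval_Proj.prems show ?case by (cases rule: eval.cases) (use eval_Proj in auto)
next
  case (eval_Comp xs gs ys f z)
  from eval_Comp.prems obtain ys' where a: "list_all2 (\<lambda>g y. eval g xs y) gs ys'" and b: "eval f ys' y'"
    by (cases rule: eval.cases) auto
  have "ys = ys'" using eval_Comp.IH(1) a
  proof (induction arbitrary: ys' rule: list_all2_induct)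
    case Nil then show ?case by simp
  next
    case (Cons g gs y ys) then show ?case by (cases ys') auto
  qed
  then show ?case using eval_Comp.IH(2) b by blast
next
  case (eval_Prim0 f xs y g) from eval_Prim0.prems show ?case by (cases rule: eval.cases) (use eval_Prim0 in auto)
next
  case (eval_PrimS f g n xs y z)
  from eval_PrimS.prems show ?case
    by (cases rule: eval.cases) (use eval_PrimS.IH in auto)
next
  case (eval_Mu f n xs)
  from eval_Mu.prems obtain n' where n': "y' = n'" "eval f (n' # xs) 0" "\<forall>m<n'. \<exists>k. eval f (m # xs) (Suc k)"
    by (cases rule: eval.cases) auto
  show ?case
  proof (rule ccontr)
    assume "n \<noteq> y'"
    then consider "n < n'" | "n' < n" using n' by linarith
    then show False
    proof cases
      case 1 then obtain k where "eval f (n # xs) (Suc k)" using n' by blast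
      then show False using eval_Mu.IH(1) by force
    next
      case 2
      from eval_Mu.IH(2) 2 obtain k2 where "\<forall>x. eval f (n' # xs) x \<longrightarrow> Suc k2 = x" by blast
      then show False using n'(2) by force
    qed
  qed
qed

definition ok :: "nat \<Rightarrow> recf \<Rightarrow> (nat list \<Rightarrow> nat) \<Rightarrow> bool" where
  "ok n F f \<longleftrightarrow> (\<forall>xs. length xs = n \<longrightarrow> eval F xs (f xs))"

lemma okD: "ok n F f \<Longrightarrow> length xs = n \<Longrightarrow> eval F xs (f xs)"
  by (simp add: ok_def)

lemma ok_cong: "ok n F f \<Longrightarrow> (\<And>xs. length xs = n \<Longrightarrow> f xs = g xs) \<Longrightarrow> ok n F g"
  by (simp add: ok_def)

lemma ok_Zero: "ok n Zero (\<lambda>_. 0)"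
  by (simp add: ok_def eval_Zero)

lemma ok_Succ: "ok (Suc n) Succ (\<lambda>xs. Suc (xs ! 0))"
  unfolding ok_def by (auto simp: length_Suc_conv intro: eval_Succ)

lemma ok_Proj: "i < n \<Longrightarrow> ok n (Proj i) (\<lambda>xs. xs ! i)"
  unfolding ok_def by (auto intro: eval_Proj)

lemma ok_Comp1: "ok 1 F f \<Longrightarrow> ok n G g \<Longrightarrow> ok n (Comp F [G]) (\<lambda>xs. f [g xs])"
  unfolding ok_def by (auto intro!: eval_Comp[where ys="[_]"])

lemma ok_Comp2: "ok 2 F f \<Longrightarrow> ok n G1 g1 \<Longrightarrow> ok n G2 g2 \<Longrightarrow>
   ok n (Comp F [G1, G2]) (\<lambda>xs. f [g1 xs, g2 xs])"
  unfolding ok_def by (auto intro!: eval_Comp[where ys="[_,_]"])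

lemma ok_Comp3: "ok 3 F f \<Longrightarrow> ok n G1 g1 \<Longrightarrow> ok n G2 g2 \<Longrightarrow> ok n G3 g3 \<Longrightarrow>
   ok n (Comp F [G1, G2, G3]) (\<lambda>xs. f [g1 xs, g2 xs, g3 xs])"
  unfolding ok_def by (auto intro!: eval_Comp[where ys="[_,_,_]"])

lemma ok_Prim: assumes "ok n F f" "ok (Suc (Suc n)) G g"
  shows "ok (Suc n) (Prim F G) (\<lambda>xs. rec_nat (f (tl xs)) (\<lambda>m y. g (m # y # tl xs)) (xs ! 0))"
  unfolding ok_def
proof (intro allI impI)
  fix xs :: "nat list" assume "length xs = Suc n"
  then obtain a ys where xs: "xs = a # ys" "length ys = n" by (cases xs) auto
  have "eval (Prim F G) (m # ys) (rec_nat (f ys) (\<lambda>m y. g (m # y # ys)) m)" for m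
    by (induction m) (use assms xs in \<open>auto simp: ok_def intro: eval_Prim0 eval_PrimS\<close>)
  then show "eval (Prim F G) xs (rec_nat (f (tl xs)) (\<lambda>m y. g (m # y # tl xs)) (xs ! 0))"
    using xs by simp
qed

lemma ok_Mu: assumes "ok (Suc n) F f" "\<And>xs. length xs = n \<Longrightarrow> \<exists>m. f (m # xs) = 0"
  shows "ok n (Mu F) (\<lambda>xs. LEAST m. f (m # xs) = 0)"
  unfolding ok_def
proof (intro allI impI)
  fix xs :: "nat list" assume l: "length xs = n"
  let ?m = "LEAST m. f (m # xs) = 0"
  have z: "f (?m # xs) = 0" using assms(2)[OF l] by (rule LeastI_ex)
  have "\<forall>m<?m. \<exists>k. eval F (m # xs) (Suc k)"
  proof (intro allI impI)
    fix m assume "m < ?m"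
    then have "f (m # xs) \<noteq> 0" using not_less_Least by blast
    then show "\<exists>k. eval F (m # xs) (Suc k)" using okD[OF assms(1), of "m # xs"] l
      by (metis length_Cons not0_implies_Suc)
  qed
  then show "eval (Mu F) xs ?m" using okD[OF assms(1), of "?m # xs"] l z
    by (intro eval_Mu) auto
qed

lemma ok_eval_eq: "ok n F f \<Longrightarrow> length xs = n \<Longrightarrow> eval F xs y \<longleftrightarrow> y = f xs"
  using okD eval_det by blast




lemma ok_Mu1: "ok 2 F f \<Longrightarrow> (\<And>xs. length xs = 1 \<Longrightarrow> \<exists>m. f (m # xs) = 0) \<Longrightarrow> ok 1 (Mu F) (\<lambda>xs. LEAST m. f (m # xs) = 0)"
  using ok_Mu[of 1 F f] by (simp add: numeral_eq_Suc)
lemma ok_Succ1: "ok 1 Succ (\<lambda>xs. Suc (xs ! 0))" using ok_Succ[of 0] by simp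

lemma rn_add[simp]: "rec_nat a (\<lambda>m y. Suc y) n = a + n" by (induction n) auto
lemma rn_sub[simp]: "rec_nat a (\<lambda>m y. y - Suc 0) n = a - n" by (induction n) auto
lemma rn_tri[simp]: "rec_nat 0 (\<lambda>m y. Suc (y + m)) n = triangle n" by (induction n) auto
lemma rn_pred[simp]: "rec_nat 0 (\<lambda>m y. m) n = n - 1" by (cases n) auto
lemma rn_if[simp]: "rec_nat a (\<lambda>m y. b) n = (if n = 0 then a else b)" by (cases n) auto

lemma P01: "ok 1 (Proj 0) (\<lambda>xs. xs ! 0)" by (rule ok_Proj) simp
lemma P02: "ok 2 (Proj 0) (\<lambda>xs. xs ! 0)" by (rule ok_Proj) simp
lemma P12: "ok 2 (Proj 1) (\<lambda>xs. xs ! 1)" by (rule ok_Proj) simp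
lemma P03: "ok 3 (Proj 0) (\<lambda>xs. xs ! 0)" by (rule ok_Proj) simp
lemma P13: "ok 3 (Proj 1) (\<lambda>xs. xs ! 1)" by (rule ok_Proj) simp
lemma P23: "ok 3 (Proj 2) (\<lambda>xs. xs ! 2)" by (rule ok_Proj) simp
lemma P04: "ok 4 (Proj 0) (\<lambda>xs. xs ! 0)" by (rule ok_Proj) simp
lemma P14: "ok 4 (Proj 1) (\<lambda>xs. xs ! 1)" by (rule ok_Proj) simp
lemma P24: "ok 4 (Proj 2) (\<lambda>xs. xs ! 2)" by (rule ok_Proj) simp
lemma P34: "ok 4 (Proj 3) (\<lambda>xs. xs ! 3)" by (rule ok_Proj) simp
lemma P05: "ok 5 (Proj 0) (\<lambda>xs. xs ! 0)" by (rule ok_Proj) simp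
lemma P15: "ok 5 (Proj 1) (\<lambda>xs. xs ! 1)" by (rule ok_Proj) simp
lemma P25: "ok 5 (Proj 2) (\<lambda>xs. xs ! 2)" by (rule ok_Proj) simp
lemma P35: "ok 5 (Proj 3) (\<lambda>xs. xs ! 3)" by (rule ok_Proj) simp
lemma P45: "ok 5 (Proj 4) (\<lambda>xs. xs ! 4)" by (rule ok_Proj) simp
lemma ok_Prim0: "ok 0 F f \<Longrightarrow> ok 2 G g \<Longrightarrow> ok 1 (Prim F G) (\<lambda>xs. rec_nat (f (tl xs)) (\<lambda>m y. g (m # y # tl xs)) (xs ! 0))"
  using ok_Prim[of 0 F f G g] by (simp add: numeral_eq_Suc)
lemma ok_Prim1: "ok 1 F f \<Longrightarrow> ok 3 G g \<Longrightarrow> ok 2 (Prim F G) (\<lambda>xs. rec_nat (f (tl xs)) (\<lambda>m y. g (m # y # tl xs)) (xs ! 0))"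
  using ok_Prim[of 1 F f G g] by (simp add: numeral_eq_Suc)
lemma ok_Prim2: "ok 2 F f \<Longrightarrow> ok 4 G g \<Longrightarrow> ok 3 (Prim F G) (\<lambda>xs. rec_nat (f (tl xs)) (\<lambda>m y. g (m # y # tl xs)) (xs ! 0))"
  using ok_Prim[of 2 F f G g] by (simp add: numeral_eq_Suc)
lemma ok_Prim3: "ok 3 F f \<Longrightarrow> ok 5 G g \<Longrightarrow> ok 4 (Prim F G) (\<lambda>xs. rec_nat (f (tl xs)) (\<lambda>m y. g (m # y # tl xs)) (xs ! 0))"
  using ok_Prim[of 3 F f G g] by (simp add: numeral_eq_Suc)

fun konst :: "nat \<Rightarrow> recf" where
  "konst 0 = Zero"
| "konst (Suc m) = Comp Succ [konst m]"

lemma ok_konst: "ok n (konst m) (\<lambda>_. m)"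
proof (induction m)
  case 0 then show ?case by (simp add: ok_Zero)
next
  case (Suc m)
  have "ok n (Comp Succ [konst m]) (\<lambda>xs. Suc ([m] ! 0))"
    using ok_Comp1[OF ok_Succ1 Suc] by simp
  then show ?case by simp
qed

definition "Rpred = Prim Zero (Proj 0)"
lemma ok_pred: "ok 1 Rpred (\<lambda>xs. xs ! 0 - 1)"
proof -
  have "ok 1 Rpred (\<lambda>xs. rec_nat 0 (\<lambda>m y. (m # y # tl xs) ! 0) (xs ! 0))"
    unfolding Rpred_def using ok_Prim0[OF ok_Zero P02] by simp
  then show ?thesis by (rule ok_cong) (auto simp: nth_tl numeral_2_eq_2)
qed

definition "Radd = Prim (Proj 0) (Comp Succ [Proj 1])"
lemma ok_add: "ok 2 Radd (\<lambda>xs. xs ! 0 + xs ! 1)"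
proof -
  have s: "ok 3 (Comp Succ [Proj 1]) (\<lambda>xs. Suc (xs ! 1))"
    using ok_Comp1[OF ok_Succ1 P13] by simp
  have "ok 2 Radd (\<lambda>xs. rec_nat (tl xs ! 0) (\<lambda>m y. Suc y) (xs ! 0))"
    unfolding Radd_def using ok_Prim1[OF P01 s] by simp
  then show ?thesis by (rule ok_cong) (auto simp: nth_tl numeral_2_eq_2)
qed

definition "Rsub0 = Prim (Proj 0) (Comp Rpred [Proj 1])"
definition "Rsub = Comp Rsub0 [Proj 1, Proj 0]"
lemma ok_sub: "ok 2 Rsub (\<lambda>xs. xs ! 0 - xs ! 1)"
proof -
  have s: "ok 3 (Comp Rpred [Proj 1]) (\<lambda>xs. xs ! 1 - 1)"
    using ok_Comp1[OF ok_pred P13] by simp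
  have "ok 2 Rsub0 (\<lambda>xs. rec_nat (tl xs ! 0) (\<lambda>m y. y - 1) (xs ! 0))"
    unfolding Rsub0_def using ok_Prim1[OF P01 s] by simp
  then have "ok 2 Rsub0 (\<lambda>xs. xs ! 1 - xs ! 0)"
    by (rule ok_cong) (auto simp: nth_tl numeral_2_eq_2)
  then have "ok 2 (Comp Rsub0 [Proj 1, Proj 0]) (\<lambda>xs. [xs!1, xs!0] ! 1 - [xs!1, xs!0] ! 0)"
    by (rule ok_Comp2[OF _ P12 P02])
  then show ?thesis unfolding Rsub_def by simp
qed

definition "Rtri = Prim Zero (Comp Radd [Proj 1, Comp Succ [Proj 0]])"
lemma ok_tri: "ok 1 Rtri (\<lambda>xs. triangle (xs ! 0))"
proof -
  have s: "ok 2 (Comp Radd [Proj 1, Comp Succ [Proj 0]]) (\<lambda>xs. xs ! 1 + Suc (xs ! 0))"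
    using ok_Comp2[OF ok_add P12 ok_Comp1[OF ok_Succ1 P02]] by simp
  have "ok 1 Rtri (\<lambda>xs. rec_nat 0 (\<lambda>m y. y + Suc m) (xs ! 0))"
    unfolding Rtri_def using ok_Prim0[OF ok_Zero s] by simp
  then show ?thesis by (rule ok_cong) (auto simp: nth_tl numeral_2_eq_2)
qed

definition "Rpenc = Comp Radd [Comp Rtri [Comp Radd [Proj 0, Proj 1]], Proj 0]"
lemma ok_penc: "ok 2 Rpenc (\<lambda>xs. prod_encode (xs ! 0, xs ! 1))"
proof -
  have "ok 2 Rpenc (\<lambda>xs. triangle (xs ! 0 + xs ! 1) + xs ! 0)"
    unfolding Rpenc_def
    using ok_Comp2[OF ok_add ok_Comp1[OF ok_tri ok_Comp2[OF ok_add P02 P12]] P02]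
    by simp
  then show ?thesis by (rule ok_cong) (simp add: prod_encode_def)
qed

definition "Rif = Prim (Proj 0) (Proj 3)"
lemma ok_if: "ok 3 Rif (\<lambda>xs. if xs ! 0 = 0 then xs ! 1 else xs ! 2)"
proof -
  have "ok 3 Rif (\<lambda>xs. rec_nat (tl xs ! 0) (\<lambda>m y. tl xs ! 1) (xs ! 0))"
    unfolding Rif_def using ok_Prim2[OF P02 P34] by simp
  then show ?thesis by (rule ok_cong) (auto simp: nth_tl numeral_2_eq_2)
qed

lemma triangle_mono: "m \<le> n \<Longrightarrow> triangle m \<le> triangle n"
  by (induction n) (auto simp: le_Suc_eq)

definition upS :: "nat \<Rightarrow> nat" where "upS x = (LEAST s. Suc x - triangle (Suc s) = 0)"

lemma upS_enc: "upS (prod_encode (a, b)) = a + b"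
  unfolding upS_def
proof (rule Least_equality)
  show "Suc (prod_encode (a, b)) - triangle (Suc (a + b)) = 0"
    by (simp add: prod_encode_def)
next
  fix s assume "Suc (prod_encode (a, b)) - triangle (Suc s) = 0"
  then have "triangle (Suc s) > triangle (a + b) + a" by (simp add: prod_encode_def)
  show "a + b \<le> s"
  proof (rule ccontr)
    assume "\<not> a + b \<le> s"
    then have "triangle (Suc s) \<le> triangle (a + b)" by (intro triangle_mono) simp
    then show False using \<open>triangle (Suc s) > _\<close> by simp
  qed
qed

lemma snd_decode: "snd (prod_decode x) = upS x - (x - triangle (upS x))"
  and fst_decode: "fst (prod_decode x) = x - triangle (upS x)"
proof -
  obtain a b where x: "x = prod_encode (a, b)" by (metis prod_decode_inverse surj_pair)
  show "snd (prod_decode x) = upS x - (x - triangle (upS x))"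
       "fst (prod_decode x) = x - triangle (upS x)"
    by (simp_all add: x upS_enc) (simp_all add: prod_encode_def)
qed

definition "RupS = Mu (Comp Rsub [Comp Succ [Proj 1], Comp Rtri [Comp Succ [Proj 0]]])"
lemma ok_upS: "ok 1 RupS (\<lambda>xs. upS (xs ! 0))"
proof -
  have g: "ok 2 (Comp Rsub [Comp Succ [Proj 1], Comp Rtri [Comp Succ [Proj 0]]])
      (\<lambda>xs. Suc (xs ! 1) - triangle (Suc (xs ! 0)))"
    using ok_Comp2[OF ok_sub ok_Comp1[OF ok_Succ1 P12]
      ok_Comp1[OF ok_tri ok_Comp1[OF ok_Succ1 P02]]] by simp
  have "ok 1 RupS (\<lambda>xs. LEAST m. Suc ((m # xs) ! 1) - triangle (Suc ((m # xs) ! 0)) = 0)"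
    unfolding RupS_def
  proof (rule ok_Mu1[OF g])
    fix xs :: "nat list" assume "length xs = 1"
    have "Suc (xs ! 0) \<le> triangle (Suc (xs ! 0))" by (induction "xs ! 0") auto
    then show "\<exists>m. Suc ((m # xs) ! 1) - triangle (Suc ((m # xs) ! 0)) = 0"
      by (intro exI[of _ "xs ! 0"]) simp
  qed
  then show ?thesis by (simp add: upS_def)
qed

definition "Rfst = Comp Rsub [Proj 0, Comp Rtri [RupS]]"
definition "Rsnd = Comp Rsub [RupS, Rfst]"
lemma ok_fst: "ok 1 Rfst (\<lambda>xs. fst (prod_decode (xs ! 0)))"
  unfolding Rfst_def fst_decode
  using ok_Comp2[OF ok_sub P01 ok_Comp1[OF ok_tri ok_upS]] by simp
lemma ok_snd: "ok 1 Rsnd (\<lambda>xs. snd (prod_decode (xs ! 0)))"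
  unfolding Rsnd_def snd_decode
  using ok_Comp2[OF ok_sub ok_upS ok_fst] by (simp add: fst_decode)




lemma encode_inj: "encode f = encode g \<Longrightarrow> f = g"
proof (induction f arbitrary: g)
  case (Comp f gs)
  then show ?case
  proof (cases g)
    case (Comp f' gs')
    with Comp.prems have "encode f = encode f'" "map encode gs = map encode gs'"
      by (auto simp: list_encode_eq)
    then have "f = f'" "gs = gs'" using Comp.IH
      by (auto intro: list.inj_map_strong[of gs gs' encode encode])
    then show ?thesis using Comp by simp
  qed auto
qed (case_tac g; auto)+

definition gcode :: "recf \<Rightarrow> nat \<Rightarrow> nat" where
  "gcode H i = prod_encode (3, prod_encode (i, list_encode [encode H]))"

lemma eval_Comp1_iff: "eval (Comp F [G]) xs y \<longleftrightarrow> (\<exists>v. eval G xs v \<and> eval F [v] y)"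
proof
  assume "eval (Comp F [G]) xs y"
  then show "\<exists>v. eval G xs v \<and> eval F [v] y"
    by (cases rule: eval.cases) (auto simp: list_all2_Cons1)
next
  assume "\<exists>v. eval G xs v \<and> eval F [v] y"
  then show "eval (Comp F [G]) xs y" by (auto intro!: eval_Comp[where ys="[_]"])
qed

lemma W_gcode: "W (gcode H i) = {x. \<exists>v. eval H [x] v \<and> v \<in> W i}"
proof safe
  fix x assume "x \<in> W (gcode H i)"
  then obtain f y where f: "encode f = gcode H i" "eval f [x] y" unfolding W_def by auto
  then obtain f0 gs where "f = Comp f0 gs" "encode f0 = i" "map encode gs = [encode H]"
    unfolding gcode_def by (cases f) (auto simp: list_encode_eq simp del: list_encode.simps)
  then have "f = Comp f0 [H]" "encode f0 = i" by (auto intro: encode_inj)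
  with f show "\<exists>v. eval H [x] v \<and> v \<in> W i" unfolding W_def by (auto simp: eval_Comp1_iff)
next
  fix x v assume "eval H [x] v" "v \<in> W i"
  then obtain f0 y where "encode f0 = i" "eval f0 [v] y" unfolding W_def by auto
  then have "encode (Comp f0 [H]) = gcode H i" "eval (Comp f0 [H]) [x] y"
    using \<open>eval H [x] v\<close> by (auto simp: gcode_def eval_Comp1_iff simp del: list_encode.simps)
  then show "x \<in> W (gcode H i)" unfolding W_def by blast
qed

lemma computable_K: "computable (\<lambda>i. prod_encode (3, prod_encode (i, K)))"
proof -
  have "ok 1 (Comp Rpenc [konst 3, Comp Rpenc [Proj 0, konst K]])
     (\<lambda>xs. prod_encode (3, prod_encode (xs ! 0, K)))"
    using ok_Comp2[OF ok_penc ok_konst ok_Comp2[OF ok_penc P01 ok_konst]] by simp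
  then show ?thesis unfolding computable_def
    by (intro exI[of _ "Comp Rpenc [konst 3, Comp Rpenc [Proj 0, konst K]]"] allI)
       (drule okD[where xs="[_]"], auto)
qed

lemma computable_gcode: "computable (gcode H)"
  unfolding gcode_def by (rule computable_K)

definition "guard A C = Comp (Proj 0) [A, Mu (Comp C [Proj 1])]"

lemma eval_guard: assumes A: "ok 1 A a" and C: "ok 1 C c"
  shows "eval (guard A C) [x] v \<longleftrightarrow> c [x] = 0 \<and> v = a [x]"
proof -
  have G: "ok 2 (Comp C [Proj 1]) (\<lambda>xs. c [xs ! 1])" using ok_Comp1[OF C P12] .
  have mu: "eval (Mu (Comp C [Proj 1])) [x] w \<longleftrightarrow> c [x] = 0 \<and> w = 0" for w
  proof
    assume "eval (Mu (Comp C [Proj 1])) [x] w"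
    then have e: "eval (Comp C [Proj 1]) [w, x] 0" "\<forall>m<w. \<exists>k. eval (Comp C [Proj 1]) [m, x] (Suc k)"
      by (cases rule: eval.cases, auto)+
    have c0: "c [x] = 0" using e(1) ok_eval_eq[OF G, of "[w, x]"] by simp
    show "c [x] = 0 \<and> w = 0"
    proof (rule ccontr)
      assume "\<not> (c [x] = 0 \<and> w = 0)"
      then have "0 < w" using c0 by simp
      then obtain k where "eval (Comp C [Proj 1]) [0, x] (Suc k)" using e(2) by blast
      then show False using ok_eval_eq[OF G, of "[0, x]"] c0 by simp
    qed
  next
    assume "c [x] = 0 \<and> w = 0"
    then show "eval (Mu (Comp C [Proj 1])) [x] w"
      using okD[OF G, of "[0, x]"] by (auto intro: eval_Mu[where n=0, simplified])
  qed
  show ?thesis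
  proof
    assume "eval (guard A C) [x] v"
    then obtain ys where "list_all2 (\<lambda>g y. eval g [x] y) [A, Mu (Comp C [Proj 1])] ys" "eval (Proj 0) ys v"
      unfolding guard_def by (cases rule: eval.cases) auto
    then obtain y1 y2 where "ys = [y1, y2]" "eval A [x] y1" "eval (Mu (Comp C [Proj 1])) [x] y2" "eval (Proj 0) [y1, y2] v"
      by (auto simp: list_all2_Cons1)
    then show "c [x] = 0 \<and> v = a [x]" using mu ok_eval_eq[OF A, of "[x]"]
      by (auto elim: eval.cases)
  next
    assume "c [x] = 0 \<and> v = a [x]"
    then show "eval (guard A C) [x] v" unfolding guard_def using mu okD[OF A, of "[x]"]
      by (auto intro!: eval_Comp[where ys="[a [x], 0]"] intro: eval_Proj[of 0 "[a [x], 0]", simplified])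
  qed
qed




definition "ok1 F f \<longleftrightarrow> ok 1 F (\<lambda>xs. f (xs ! 0))"
definition "ok2 F f \<longleftrightarrow> ok 2 F (\<lambda>xs. f (xs ! 0) (xs ! 1))"
definition "ok3 F f \<longleftrightarrow> ok 3 F (\<lambda>xs. f (xs ! 0) (xs ! 1) (xs ! 2))"

lemma c1: "ok1 F f \<Longrightarrow> ok1 G g \<Longrightarrow> ok1 (Comp F [G]) (\<lambda>x. f (g x))"
  unfolding ok1_def using ok_Comp1 by fastforce
lemma c2: "ok2 F f \<Longrightarrow> ok1 G1 g1 \<Longrightarrow> ok1 G2 g2 \<Longrightarrow> ok1 (Comp F [G1, G2]) (\<lambda>x. f (g1 x) (g2 x))"
  unfolding ok1_def ok2_def using ok_Comp2 by fastforce
lemma c3: "ok3 F f \<Longrightarrow> ok1 G1 g1 \<Longrightarrow> ok1 G2 g2 \<Longrightarrow> ok1 G3 g3 \<Longrightarrow>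
    ok1 (Comp F [G1, G2, G3]) (\<lambda>x. f (g1 x) (g2 x) (g3 x))"
  unfolding ok1_def ok3_def using ok_Comp3 by fastforce

definition pf :: "nat \<Rightarrow> nat" where "pf x = fst (prod_decode x)"
definition ps :: "nat \<Rightarrow> nat" where "ps x = snd (prod_decode x)"
definition sel :: "nat \<Rightarrow> nat \<Rightarrow> nat" where "sel m d = pf ((ps ^^ m) d)"

lemma a_fst: "ok1 Rfst pf" unfolding ok1_def pf_def by (rule ok_fst)
lemma a_snd: "ok1 Rsnd ps" unfolding ok1_def ps_def by (rule ok_snd)
lemma a_id: "ok1 (Proj 0) (\<lambda>x. x)" unfolding ok1_def by (rule P01)
lemma a_suc: "ok1 Succ Suc" unfolding ok1_def by (rule ok_Succ1)
lemma a_konst: "ok1 (konst m) (\<lambda>_. m)" unfolding ok1_def by (rule ok_konst)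
lemma a_add: "ok2 Radd (+)" unfolding ok2_def by (rule ok_add)
lemma a_sub: "ok2 Rsub (-)" unfolding ok2_def by (rule ok_sub)
lemma a_penc: "ok2 Rpenc (\<lambda>a b. prod_encode (a, b))" unfolding ok2_def by (rule ok_penc)
lemma a_if: "ok3 Rif (\<lambda>c a b. if c = 0 then a else b)" unfolding ok3_def by (rule ok_if)

lemma rn_iter: "rec_nat a (\<lambda>m y. f y) n = (f ^^ n) a" by (induction n) auto

definition "Riter = Prim (Proj 0) (Comp Rsnd [Proj 1])"
definition "Rsel = Comp Rfst [Riter]"
lemma a_sel: "ok2 Rsel sel"
proof -
  have s: "ok 3 (Comp Rsnd [Proj 1]) (\<lambda>xs. ps (xs ! 1))"
    using ok_Comp1[OF ok_snd P13] by (simp add: ps_def)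
  have "ok 2 Riter (\<lambda>xs. rec_nat (tl xs ! 0) (\<lambda>m y. ps y) (xs ! 0))"
    unfolding Riter_def using ok_Prim1[OF P01 s] by simp
  then have "ok 2 Riter (\<lambda>xs. (ps ^^ (xs ! 0)) (xs ! 1))"
    by (rule ok_cong) (simp add: rn_iter nth_tl)
  then show ?thesis unfolding ok2_def Rsel_def sel_def using ok_Comp1[OF ok_fst]
    by (simp add: pf_def)
qed

definition "R2 = Comp Rpenc [Rfst, Comp Rfst [Rsnd]]"
definition "h2 x = prod_encode (pf x, pf (ps x))"
lemma a_R2: "ok1 R2 h2"
  unfolding R2_def h2_def[abs_def] by (rule c2[OF a_penc a_fst c1[OF a_fst a_snd]])

lemma W_R2: "W (gcode R2 i) = {x. h2 x \<in> W i}"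
  unfolding W_gcode using ok_eval_eq[OF a_R2[unfolded ok1_def], of "[_]"] by auto

definition "RN0 = Comp Rfst [Rsnd]"
definition "RK = Comp Rfst [Comp Rsnd [Rsnd]]"
definition "RD = Comp Rsnd [Comp Rsnd [Rsnd]]"
definition "RT = Comp Rfst [Rfst]"
definition "RP = Comp Rfst [Comp Rsnd [Rfst]]"
definition "RZ = Comp Rsnd [Comp Rsnd [Rfst]]"
definition "RJ = Comp Rfst [RP]"
definition "RJ' = Comp Rsnd [RP]"

lemma a_N0: "ok1 RN0 (\<lambda>x. pf (ps x))" unfolding RN0_def by (rule c1[OF a_fst a_snd])
lemma a_K: "ok1 RK (\<lambda>x. pf (ps (ps x)))" unfolding RK_def by (rule c1[OF a_fst c1[OF a_snd a_snd]])
lemma a_D: "ok1 RD (\<lambda>x. ps (ps (ps x)))" unfolding RD_def by (rule c1[OF a_snd c1[OF a_snd a_snd]])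
lemma a_T: "ok1 RT (\<lambda>x. pf (pf x))" unfolding RT_def by (rule c1[OF a_fst a_fst])
lemma a_P: "ok1 RP (\<lambda>x. pf (ps (pf x)))" unfolding RP_def by (rule c1[OF a_fst c1[OF a_snd a_fst]])
lemma a_Z: "ok1 RZ (\<lambda>x. ps (ps (pf x)))" unfolding RZ_def by (rule c1[OF a_snd c1[OF a_snd a_fst]])
lemma a_J: "ok1 RJ (\<lambda>x. pf (pf (ps (pf x))))" unfolding RJ_def by (rule c1[OF a_fst a_P])
lemma a_J': "ok1 RJ' (\<lambda>x. ps (pf (ps (pf x))))" unfolding RJ'_def by (rule c1[OF a_snd a_P])

definition "cnd1 x = (let k = pf (ps (ps x)); d = ps (ps (ps x)); t = pf (pf x); p = pf (ps (pf x));
   j = pf p; j' = ps p in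
   if t = 0 then Suc p - k
   else if ((j - k) + (k - j)) + ((j' - k) + (k - j')) = 0 then 0
   else ((Suc j - k) + (Suc j' - k)) + ((sel j d - sel j' d) + (sel j' d - sel j d)))"

definition "out1 x = (let n0 = pf (ps x); d = ps (ps (ps x)); t = pf (pf x); p = pf (ps (pf x));
   z = ps (ps (pf x)) in
   if t = 0 then prod_encode (z, sel p d) else prod_encode (z, n0))"

definition "Rsub2 A B = Comp Rsub [A, B]"
definition "Radd2 A B = Comp Radd [A, B]"
definition "Rabs A B = Radd2 (Rsub2 A B) (Rsub2 B A)"
lemma a_sub2: "ok1 A a \<Longrightarrow> ok1 B b \<Longrightarrow> ok1 (Rsub2 A B) (\<lambda>x. a x - b x)"
  unfolding Rsub2_def by (rule c2[OF a_sub])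
lemma a_add2: "ok1 A a \<Longrightarrow> ok1 B b \<Longrightarrow> ok1 (Radd2 A B) (\<lambda>x. a x + b x)"
  unfolding Radd2_def by (rule c2[OF a_add])
lemma a_abs: "ok1 A a \<Longrightarrow> ok1 B b \<Longrightarrow> ok1 (Rabs A B) (\<lambda>x. (a x - b x) + (b x - a x))"
  unfolding Rabs_def by (intro a_add2 a_sub2)

definition "RsJ = Comp Rsel [RJ, RD]"
definition "RsJ' = Comp Rsel [RJ', RD]"
definition "RsP = Comp Rsel [RP, RD]"
lemma a_sJ: "ok1 RsJ (\<lambda>x. sel (pf (pf (ps (pf x)))) (ps (ps (ps x))))"
  unfolding RsJ_def by (rule c2[OF a_sel a_J a_D])
lemma a_sJ': "ok1 RsJ' (\<lambda>x. sel (ps (pf (ps (pf x)))) (ps (ps (ps x))))"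
  unfolding RsJ'_def by (rule c2[OF a_sel a_J' a_D])
lemma a_sP: "ok1 RsP (\<lambda>x. sel (pf (ps (pf x))) (ps (ps (ps x))))"
  unfolding RsP_def by (rule c2[OF a_sel a_P a_D])

definition "Rcnd1 = Comp Rif [RT, Rsub2 (Comp Succ [RP]) RK,
   Comp Rif [Radd2 (Rabs RJ RK) (Rabs RJ' RK), konst 0,
     Radd2 (Radd2 (Rsub2 (Comp Succ [RJ]) RK) (Rsub2 (Comp Succ [RJ']) RK)) (Rabs RsJ RsJ')]]"

lemma a_cnd1: "ok1 Rcnd1 cnd1"
proof -
  have "ok1 Rcnd1 (\<lambda>x. if pf (pf x) = 0 then Suc (pf (ps (pf x))) - pf (ps (ps x))
     else if ((pf (pf (ps (pf x))) - pf (ps (ps x))) + (pf (ps (ps x)) - pf (pf (ps (pf x)))))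
        + ((ps (pf (ps (pf x))) - pf (ps (ps x))) + (pf (ps (ps x)) - ps (pf (ps (pf x))))) = 0 then 0
     else ((Suc (pf (pf (ps (pf x)))) - pf (ps (ps x))) + (Suc (ps (pf (ps (pf x)))) - pf (ps (ps x))))
       + ((sel (pf (pf (ps (pf x)))) (ps (ps (ps x))) - sel (ps (pf (ps (pf x)))) (ps (ps (ps x))))
        + (sel (ps (pf (ps (pf x)))) (ps (ps (ps x))) - sel (pf (pf (ps (pf x)))) (ps (ps (ps x))))))"
    unfolding Rcnd1_def
    by (rule c3[OF a_if a_T a_sub2[OF c1[OF a_suc a_P] a_K]
          c3[OF a_if a_add2[OF a_abs[OF a_J a_K] a_abs[OF a_J' a_K]] a_konst
             a_add2[OF a_add2[OF a_sub2[OF c1[OF a_suc a_J] a_K] a_sub2[OF c1[OF a_suc a_J'] a_K]]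
                a_abs[OF a_sJ a_sJ']]]])
  then show ?thesis unfolding cnd1_def[abs_def] Let_def .
qed

definition "Rout1 = Comp Rif [RT, Comp Rpenc [RZ, RsP], Comp Rpenc [RZ, RN0]]"
lemma a_out1: "ok1 Rout1 out1"
proof -
  have "ok1 Rout1 (\<lambda>x. if pf (pf x) = 0 then prod_encode (ps (ps (pf x)), sel (pf (ps (pf x))) (ps (ps (ps x))))
      else prod_encode (ps (ps (pf x)), pf (ps x)))"
    unfolding Rout1_def by (rule c3[OF a_if a_T c2[OF a_penc a_Z a_sP] c2[OF a_penc a_Z a_N0]])
  then show ?thesis unfolding out1_def[abs_def] Let_def .
qed

definition "R1 = guard Rout1 Rcnd1"
lemma W_R1: "W (gcode R1 i) = {x. cnd1 x = 0 \<and> out1 x \<in> W i}"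
  unfolding W_gcode R1_def
  using eval_guard[OF a_out1[unfolded ok1_def] a_cnd1[unfolded ok1_def]] by auto




lemma pf_enc[simp]: "pf (prod_encode (a, b)) = a" by (simp add: pf_def)
lemma ps_enc[simp]: "ps (prod_encode (a, b)) = b" by (simp add: ps_def)
lemma enc_pf_ps: "prod_encode (pf x, ps x) = x" by (simp add: pf_def ps_def)

lemma glue:
  fixes F G :: "nat \<Rightarrow> 'a"
  assumes "\<And>S. \<exists>h. bij_betw h {n. F n = S} {n. G n = S}"
  shows "\<exists>p. bij p \<and> (\<forall>n. F n = G (p n))"
proof -
  have "\<forall>S. \<exists>h. bij_betw h {n. F n = S} {n. G n = S}" using assms by blast
  then have "\<exists>q. \<forall>S. bij_betw (q S) {n. F n = S} {n. G n = S}" by (rule choice)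
  then obtain q where q0: "\<forall>S. bij_betw (q S) {n. F n = S} {n. G n = S}" by (elim exE)
  then have q: "\<And>S. bij_betw (q S) {n. F n = S} {n. G n = S}" by blast
  define p where "p n = q (F n) n" for n
  have Gp: "G (p n) = F n" for n
  proof -
    have "n \<in> {m. F m = F n}" by simp
    then have "q (F n) n \<in> {m. G m = F n}" using bij_betwE[OF q[of "F n"]] by blast
    then show ?thesis unfolding p_def by simp
  qed
  have "inj p"
  proof (rule injI)
    fix a b assume ab: "p a = p b"
    then have Fab: "F a = F b" using Gp[of a] Gp[of b] by simp
    have "inj_on (q (F a)) {n. F n = F a}" using bij_betw_imp_inj_on[OF q[of "F a"]] .
    moreover have "q (F a) a = q (F a) b" using ab Fab unfolding p_def by simp
    ultimately show "a = b" using Fab by (auto dest: inj_onD)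
  qed
  moreover have "surj p"
  proof -
    { fix m
      have "m \<in> q (G m) ` {n. F n = G m}" using bij_betw_imp_surj_on[OF q[of "G m"]] by simp
      then obtain n where "F n = G m" "q (G m) n = m" by auto
      then have "p n = m" unfolding p_def by simp
      then have "m \<in> range p" by (rule range_eqI[OF sym]) }
    then show ?thesis by blast
  qed
  ultimately have "bij p" by (simp add: bij_def)
  then show ?thesis using Gp by metis
qed

lemma inf_bij: fixes A B :: "nat set" assumes "infinite A" "infinite B"
  shows "\<exists>h. bij_betw h A B"
proof -
  have "bij_betw (the_inv_into UNIV (enumerate A)) A UNIV"
    by (rule bij_betw_the_inv_into[OF bij_enumerate[OF assms(1)]])
  then show ?thesis using bij_betw_trans bij_enumerate[OF assms(2)] by blast
qed

lemma equip:
  fixes A B :: "nat set"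
  assumes AB: "\<And>F. finite F \<Longrightarrow> F \<subseteq> A \<Longrightarrow> \<exists>G. finite G \<and> G \<subseteq> B \<and> card G = card F"
      and BA: "\<And>G. finite G \<Longrightarrow> G \<subseteq> B \<Longrightarrow> \<exists>F. finite F \<and> F \<subseteq> A \<and> card F = card G"
  shows "\<exists>h. bij_betw h A B"
proof (cases "finite A")
  case False
  have "infinite B"
  proof
    assume fB: "finite B"
    obtain F where F: "F \<subseteq> A" "finite F" "card F = Suc (card B)"
      using infinite_arbitrarily_large[OF False] by blast
    obtain G where G: "G \<subseteq> B" "card G = card F" using AB[OF F(2) F(1)] by blast
    have "card G \<le> card B" using card_mono[OF fB G(1)] .
    then show False using G(2) F(3) by simp
  qed
  then show ?thesis using inf_bij False by blast
next
  case True
  have fB: "finite B"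
  proof (rule ccontr)
    assume iB: "infinite B"
    obtain G where G: "G \<subseteq> B" "finite G" "card G = Suc (card A)"
      using infinite_arbitrarily_large[OF iB] by blast
    obtain F where F: "F \<subseteq> A" "card F = card G" using BA[OF G(2) G(1)] by blast
    have "card F \<le> card A" using card_mono[OF True F(1)] .
    then show False using G(3) F(2) by simp
  qed
  obtain G where G: "G \<subseteq> B" "card G = card A" using AB[OF True subset_refl] by blast
  have c1: "card A \<le> card B" using card_mono[OF fB G(1)] G(2) by simp
  obtain F where F: "F \<subseteq> A" "card F = card B" using BA[OF fB subset_refl] by blast
  have c2: "card B \<le> card A" using card_mono[OF True F(1)] F(2) by simp
  have "card A = card B" using c1 c2 by simp
  then show ?thesis using finite_same_card_bij[OF True fB] by blast
qed

lemma col_R2: "column (W (gcode R2 i)) m = column (W i) (pf m)"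
  unfolding column_def W_R2 h2_def by simp

lemma red2: "E_set i j \<longleftrightarrow> E_perm (gcode R2 i) (gcode R2 j)"
proof -
  define X where "X = column (W i)"
  define Y where "Y = column (W j)"
  have rX: "range (\<lambda>n. X (pf n)) = range X" for X :: "nat \<Rightarrow> nat set"
  proof (auto simp: image_iff)
    fix n show "\<exists>x. X n = X (pf x)" by (rule exI[of _ "prod_encode (n, 0)"]) simp
  qed
  have fib: "infinite {n. X (pf n) = S}" if "S \<in> range X" for X :: "nat \<Rightarrow> nat set" and S
  proof -
    from that obtain m where "S = X m" by (rule rangeE)
    have "inj (\<lambda>k. prod_encode (m, k))" by (auto intro: injI)
    then have "infinite (range (\<lambda>k. prod_encode (m, k)))" by (simp add: range_inj_infinite)
    moreover have "range (\<lambda>k. prod_encode (m, k)) \<subseteq> {n. X (pf n) = S}" using \<open>S = X m\<close> by auto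
    ultimately show ?thesis by (rule infinite_super[rotated])
  qed
  have "E_perm (gcode R2 i) (gcode R2 j) \<longleftrightarrow> (\<exists>p. bij p \<and> (\<forall>n. X (pf n) = Y (pf (p n))))"
    unfolding E_perm_def col_R2 X_def Y_def by simp
  also have "\<dots> \<longleftrightarrow> range X = range Y"
  proof
    assume "\<exists>p. bij p \<and> (\<forall>n. X (pf n) = Y (pf (p n)))"
    then obtain p where p: "bij p" "\<And>n. X (pf n) = Y (pf (p n))" by blast
    have "range (\<lambda>n. X (pf n)) = range (\<lambda>n. Y (pf (p n)))" using p(2) by simp
    also have "\<dots> = (\<lambda>n. Y (pf n)) ` (p ` UNIV)" by (simp only: image_image)
    also have "p ` UNIV = UNIV" using p(1) by (simp add: bij_def)
    finally have "range (\<lambda>n. X (pf n)) = range (\<lambda>n. Y (pf n))" .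
    then show "range X = range Y" by (simp only: rX)
  next
    assume eq: "range X = range Y"
    show "\<exists>p. bij p \<and> (\<forall>n. X (pf n) = Y (pf (p n)))"
    proof (rule glue)
      fix S
      show "\<exists>h. bij_betw h {n. X (pf n) = S} {n. Y (pf n) = S}"
      proof (cases "S \<in> range X")
        case True
        have i1: "infinite {n. X (pf n) = S}" by (rule fib[OF True])
        have "S \<in> range Y" using True eq by simp
        then have i2: "infinite {n. Y (pf n) = S}" by (rule fib)
        show ?thesis by (rule inf_bij[OF i1 i2])
      next
        case False
        then have "{n. X (pf n) = S} = {}" "{n. Y (pf n) = S} = {}" using eq by auto
        then show ?thesis by (intro exI[of _ id]) simp
      qed
    qed
  qed
  finally show ?thesis unfolding E_set_def X_def Y_def by simp
qed




definition Epat :: "nat list \<Rightarrow> nat \<Rightarrow> nat \<Rightarrow> bool" where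
  "Epat ms j j' \<longleftrightarrow> (j = length ms \<and> j' = length ms) \<or> (j < length ms \<and> j' < length ms \<and> ms ! j = ms ! j')"

definition Cnt :: "(nat \<Rightarrow> nat set) \<Rightarrow> nat \<Rightarrow> nat list \<Rightarrow> nat set" where
  "Cnt X n0 ms = {y. if pf y = 0 then pf (ps y) < length ms \<and> ps (ps y) \<in> X (ms ! pf (ps y))
     else Epat ms (pf (pf (ps y))) (ps (pf (ps y))) \<and> ps (ps y) \<in> X n0}"

definition mslist :: "nat \<Rightarrow> nat \<Rightarrow> nat list" where
  "mslist k d = map (\<lambda>m. sel m d) [0..<k]"

lemma cnd1_eq: "cnd1 (prod_encode (y, prod_encode (n0, prod_encode (k, d)))) = 0 \<longleftrightarrow>
  (if pf y = 0 then pf (ps y) < k else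
    (pf (pf (ps y)) = k \<and> ps (pf (ps y)) = k) \<or>
    (pf (pf (ps y)) < k \<and> ps (pf (ps y)) < k \<and> sel (pf (pf (ps y))) d = sel (ps (pf (ps y))) d))"
  unfolding cnd1_def Let_def by auto

lemma out1_eq: "out1 (prod_encode (y, prod_encode (n0, prod_encode (k, d)))) =
  (if pf y = 0 then prod_encode (ps (ps y), sel (pf (ps y)) d) else prod_encode (ps (ps y), n0))"
  unfolding out1_def Let_def by simp

lemma col_R1: "column (W (gcode R1 i)) (prod_encode (n0, prod_encode (k, d))) =
   Cnt (column (W i)) n0 (mslist k d)"
  unfolding column_def W_R1 Cnt_def Epat_def mslist_def
  by (auto simp: cnd1_eq out1_eq split: if_splits)

definition code :: "nat list \<Rightarrow> nat" where "code ms = foldr (\<lambda>m d. prod_encode (m, d)) ms 0"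

lemma sel_0: "sel 0 d = pf d" by (simp add: sel_def)
lemma sel_Suc: "sel (Suc m) d = sel m (ps d)" by (simp add: sel_def funpow_swap1)

lemma sel_code: "m < length ms \<Longrightarrow> sel m (code ms) = ms ! m"
proof (induction ms arbitrary: m)
  case Nil then show ?case by simp
next
  case (Cons a ms) then show ?case
    by (cases m) (auto simp: code_def sel_0 sel_Suc)
qed

lemma mslist_code: "mslist (length ms) (code ms) = ms"
  by (rule nth_equalityI) (auto simp: mslist_def sel_code)

lemma range_R1: "range (column (W (gcode R1 i))) = {Cnt (column (W i)) n0 ms | n0 ms. True}"
proof safe
  fix c
  have "c = prod_encode (pf c, prod_encode (pf (ps c), ps (ps c)))" by (simp add: enc_pf_ps)
  then have "column (W (gcode R1 i)) c = Cnt (column (W i)) (pf c) (mslist (pf (ps c)) (ps (ps c)))"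
    using col_R1 by metis
  then show "\<exists>n0 ms. column (W (gcode R1 i)) c = Cnt (column (W i)) n0 ms \<and> True" by blast
next
  fix n0 ms
  have "Cnt (column (W i)) n0 ms = column (W (gcode R1 i)) (prod_encode (n0, prod_encode (length ms, code ms)))"
    using col_R1 mslist_code by metis
  then show "Cnt (column (W i)) n0 ms \<in> range (column (W (gcode R1 i)))" by simp
qed

lemma Cnt_perm: assumes "inj p" "\<And>n. X n = Y (p n)"
  shows "Cnt X n0 ms = Cnt Y (p n0) (map p ms)"
proof -
  have "Epat (map p ms) j j' \<longleftrightarrow> Epat ms j j'" for j j'
    unfolding Epat_def using assms(1) by (auto simp: inj_eq)
  then show ?thesis unfolding Cnt_def using assms(2) by auto
qed

lemma mem1: "prod_encode (1, prod_encode (prod_encode (j, j'), z)) \<in> Cnt X n0 ms \<longleftrightarrow> Epat ms j j' \<and> z \<in> X n0"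
  by (simp add: Cnt_def)
lemma mem0: "prod_encode (0, prod_encode (j, z)) \<in> Cnt X n0 ms \<longleftrightarrow> j < length ms \<and> z \<in> X (ms ! j)"
  by (simp add: Cnt_def)
lemma Cnt_ne: "y \<in> Cnt X n0 ms \<Longrightarrow> \<exists>n z. z \<in> X n"
  by (auto simp: Cnt_def split: if_splits)
lemma Epat_diag: "Epat ms j j \<longleftrightarrow> j \<le> length ms"
  by (auto simp: Epat_def)

lemma cnt_extract:
  assumes z: "z \<in> X n0" and eq: "Cnt X n0 ms = Cnt Y n1 ns"
  shows "length ms = length ns \<and> (\<forall>j<length ms. X (ms ! j) = Y (ns ! j)) \<and> (\<forall>j j'. Epat ms j j' \<longleftrightarrow> Epat ns j j')"
proof -
  have "Epat ms (length ms) (length ms)" by (simp add: Epat_def)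
  then have "z \<in> Y n1" using mem1[of "length ms" "length ms" z X n0 ms] mem1[of "length ms" "length ms" z Y n1 ns] z eq
    by simp
  then have E: "Epat ms j j' \<longleftrightarrow> Epat ns j j'" for j j'
    using mem1[of j j' z X n0 ms] mem1[of j j' z Y n1 ns] z eq by simp
  have L: "length ms = length ns"
    using E[of "length ms" "length ms"] E[of "length ns" "length ns"] by (simp add: Epat_diag)
  have "X (ms ! j) = Y (ns ! j)" if "j < length ms" for j
  proof
    show "X (ms ! j) \<subseteq> Y (ns ! j)"
      using mem0[of j _ X n0 ms] mem0[of j _ Y n1 ns] eq that L by auto
    show "Y (ns ! j) \<subseteq> X (ms ! j)"
      using mem0[of j _ X n0 ms] mem0[of j _ Y n1 ns] eq that L by auto
  qed
  then show ?thesis using L E by blast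
qed

lemma transfer:
  assumes RXY: "{Cnt X n0 ms | n0 ms. True} \<subseteq> {Cnt Y n0 ms | n0 ms. True}"
    and z: "z \<in> X n0" and F: "finite F" "F \<subseteq> {n. X n = S}"
  shows "\<exists>G. finite G \<and> G \<subseteq> {n. Y n = S} \<and> card G = card F"
proof -
  define ms where "ms = sorted_list_of_set F"
  have ms: "distinct ms" "set ms = F" "length ms = card F" using F(1) by (auto simp: ms_def)
  obtain n1 ns where eq: "Cnt X n0 ms = Cnt Y n1 ns" using RXY by blast
  note ex = cnt_extract[OF z eq]
  have dns: "distinct ns"
  proof (subst distinct_conv_nth, intro allI impI)
    fix a b assume ab: "a < length ns" "b < length ns" "a \<noteq> b"
    have "\<not> Epat ms a b" using ab ms(1) ex by (auto simp: Epat_def nth_eq_iff_index_eq)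
    then have "\<not> Epat ns a b" using ex by blast
    then show "ns ! a \<noteq> ns ! b" using ab by (auto simp: Epat_def)
  qed
  have "set ns \<subseteq> {n. Y n = S}"
  proof
    fix n assume "n \<in> set ns"
    then obtain j where j: "j < length ns" "ns ! j = n" by (auto simp: in_set_conv_nth)
    then have "ms ! j \<in> F" using ms ex by (metis nth_mem)
    then show "n \<in> {n. Y n = S}" using j ex F(2) by auto
  qed
  moreover have "card (set ns) = card F" using dns ex ms by (simp add: distinct_card)
  ultimately show ?thesis by blast
qed

lemma ne_transfer:
  assumes "{Cnt Y n0 ms | n0 ms. True} \<subseteq> {Cnt X n0 ms | n0 ms. True}" and "z \<in> Y n1"
  shows "\<exists>n z. z \<in> X n"
proof -
  have "prod_encode (1, prod_encode (prod_encode (0, 0), z)) \<in> Cnt Y n1 []"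
    unfolding mem1 Epat_def using assms(2) by simp
  moreover obtain n0 ms where "Cnt Y n1 [] = Cnt X n0 ms" using assms(1) by blast
  ultimately show ?thesis using Cnt_ne by metis
qed

lemma RX_sub: "(\<And>n0 ms. \<exists>n1 ns. Cnt X n0 ms = Cnt Y n1 ns) \<Longrightarrow>
   {Cnt X n0 ms | n0 ms. True} \<subseteq> {Cnt Y n0 ms | n0 ms. True}"
  by blast

lemma red1: "E_perm i j \<longleftrightarrow> E_set (gcode R1 i) (gcode R1 j)"
proof -
  define X where "X = column (W i)"
  define Y where "Y = column (W j)"
  have "E_set (gcode R1 i) (gcode R1 j) \<longleftrightarrow> {Cnt X n0 ms | n0 ms. True} = {Cnt Y n0 ms | n0 ms. True}"
    unfolding E_set_def range_R1 X_def Y_def by simp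
  also have "\<dots> \<longleftrightarrow> (\<exists>p. bij p \<and> (\<forall>n. X n = Y (p n)))"
  proof
    assume "\<exists>p. bij p \<and> (\<forall>n. X n = Y (p n))"
    then obtain p where p: "bij p" "\<And>n. X n = Y (p n)" by blast
    have q1: "bij (inv p)" using p(1) by (rule bij_imp_bij_inv)
    have q2: "Y n = X (inv p n)" for n
      by (simp add: p(2) surj_f_inv_f[OF bij_is_surj[OF p(1)]])
    have s1: "{Cnt X n0 ms | n0 ms. True} \<subseteq> {Cnt Y n0 ms | n0 ms. True}"
    proof (rule RX_sub)
      fix n0 ms show "\<exists>n1 ns. Cnt X n0 ms = Cnt Y n1 ns"
        using Cnt_perm[of p X Y n0 ms, OF bij_is_inj[OF p(1)] p(2)] by blast
    qed
    have s2: "{Cnt Y n0 ms | n0 ms. True} \<subseteq> {Cnt X n0 ms | n0 ms. True}"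
    proof (rule RX_sub)
      fix n0 ms show "\<exists>n1 ns. Cnt Y n0 ms = Cnt X n1 ns"
        using Cnt_perm[of "inv p" Y X n0 ms, OF bij_is_inj[OF q1] q2] by blast
    qed
    show "{Cnt X n0 ms | n0 ms. True} = {Cnt Y n0 ms | n0 ms. True}" using s1 s2 by (rule equalityI)
  next
    assume eq: "{Cnt X n0 ms | n0 ms. True} = {Cnt Y n0 ms | n0 ms. True}"
    have sXY: "{Cnt X n0 ms | n0 ms. True} \<subseteq> {Cnt Y n0 ms | n0 ms. True}" using eq by (rule equalityD1)
    have sYX: "{Cnt Y n0 ms | n0 ms. True} \<subseteq> {Cnt X n0 ms | n0 ms. True}" using eq by (rule equalityD2)
    show "\<exists>p. bij p \<and> (\<forall>n. X n = Y (p n))"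
    proof (cases "\<exists>n z. z \<in> X n")
      case False
      have "\<not> (\<exists>n z. z \<in> Y n)"
      proof
        assume "\<exists>n z. z \<in> Y n"
        then obtain n z where "z \<in> Y n" by blast
        from ne_transfer[OF sYX this] show False using False by blast
      qed
      then have "\<forall>n. X n = Y n" using False by blast
      then show ?thesis by (intro exI[of _ id]) simp
    next
      case True
      then obtain n0 z where z: "z \<in> X n0" by blast
      obtain n1 z' where z': "z' \<in> Y n1" using ne_transfer[OF sXY z] by blast
      show ?thesis
      proof (rule glue)
        fix S show "\<exists>h. bij_betw h {n. X n = S} {n. Y n = S}"
        proof (rule equip)
          fix F assume F: "finite F" "F \<subseteq> {n. X n = S}"
          show "\<exists>G. finite G \<and> G \<subseteq> {n. Y n = S} \<and> card G = card F"
            by (rule transfer[OF sXY z F])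
        next
          fix G assume G: "finite G" "G \<subseteq> {n. Y n = S}"
          show "\<exists>F. finite F \<and> F \<subseteq> {n. X n = S} \<and> card F = card G"
            by (rule transfer[OF sYX z' G])
        qed
      qed
    qed
  qed
  finally show ?thesis by (simp add: E_perm_def X_def Y_def)
qed

theorem theorem2p3:
  shows "creducible E_perm E_set \<and> creducible E_set E_perm"
  unfolding creducible_def
  using red1 red2 computable_gcode by blast


end
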